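(* Let $\mathcal{F}$ be a construction scheme over $\omega_1$ of a good type, let $(X,\leq)$ be an $\omega_1$-like partial order and let $\phi:X\to\omega_1$ be a bijection with $\phi(x)<\phi(y)$ whenever $x<y$. For $x\in X$ and $k\in\omega$ let $M^k_x=\{z\in X: z\leq x\text{ and }\phi(z)\in(\phi(x))_k\}$. Then for all $x,y\in X$ and $k\in\omega$: (1) if $\inf(x,y)$ exists and $k>\rho^{\phi[\{x,y,\inf(x,y)\}]}$, then $M^k_x\cap M^k_y=M^k_{\inf(x,y)}$; (2) if $y\leq x$ and $k>\rho(\phi(x),\phi(y))$, then $M^k_y\subseteq M^k_x$; (3) if $y\not\leq x$, then $y\in M^k_y\setminus M^k_x$; (4) if $x$ is successor-like and $k>\rho^{\phi[\mathrm{pred}(x)\cup\{x\}]}$, then $M^k_x\setminus\bigcup_{z\in\mathrm{pred}(x)}M^k_z=\{x\}$; (5) if $x$ and $y$ are incompatible, then $M^k_x\cap M^k_y=\emptyset$.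
   Context: A type is a sequence $\langle m_k,n_{k+1},r_{k+1}\rangle_{k\in\omega}$ of natural numbers with $m_0=1$ and, for all $k$, $n_{k+1}\geq2$, $m_k>r_{k+1}$, $m_{k+1}=r_{k+1}+(m_k-r_{k+1})n_{k+1}$; good if each $r$ equals $r_k$ for infinitely many $k\geq1$. A construction scheme of type $\tau$ over a set of ordinals $Y$ is a family $\mathcal{F}$ of nonempty finite subsets of $Y$, cofinal among finite subsets of $Y$ under $\subseteq$, each of size $m_k$ for some $k$, such that with $\mathcal{F}_k=\{F\in\mathcal{F}:|F|=m_k\}$: (i) for $E,F\in\mathcal{F}_k$, $E\cap F$ is an initial segment of both; (ii) every $F\in\mathcal{F}_{k+1}$ equals $F_0\cup\dots\cup F_{n_{k+1}-1}$ with $F_i\in\mathcal{F}_k$ forming a $\Delta$-system with root $R(F)$, $|R(F)|=r_{k+1}$, $R(F)<F_0\setminus R(F)<\dots<F_{n_{k+1}-1}\setminus R(F)$ ($A<B$ meaning every element of $A$ is below every element of $B$). $\rho(\alpha,\beta)=\min\{k:\exists F\in\mathcal{F}_k\ \{\alpha,\beta\}\subseteq F\}$; for finite $A$, $\rho^A=\max\{\rho(\alpha,\beta):\alpha,\beta\in A\}$; $(\alpha)_k=\{\xi\leq\alpha:\rho(\xi,\alpha)\leq k\}$. A partial order is $\omega_1$-like if it is well-founded, of size $\omega_1$, and every $(-\infty,x)=\{y:y<x\}$ is countable. $\inf(x,y)$ is the greatest lower bound when it exists; $x,y$ are incompatible if no $z$ satisfies $z\leq x$ and $z\leq y$. $\mathrm{pred}(x)$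 is the set of maximal elements of $(-\infty,x)$; $x$ is successor-like if $\mathrm{pred}(x)$ is finite and every $y<x$ satisfies $y\leq z$ for some $z\in\mathrm{pred}(x)$. *)

theory Defs
  imports Main "HOL-Library.Countable_Set"
begin

text \<open>The countable ordinal omega_1 is represented (up to order isomorphism) by a
  well-ordered type that is uncountable and all of whose proper initial segments are countable.\<close>
definition is_omega1 :: "'b::wellorder itself \<Rightarrow> bool" where
  "is_omega1 _ \<longleftrightarrow> \<not> countable (UNIV :: 'b set) \<and> (\<forall>x::'b. countable {y. y < x})"

text \<open>Types <m_k, n_{k+1}, r_{k+1}>: the sequences m, n, r are indexed so that
  n k and r k are only meaningful for k \<ge> 1.\<close>
definition is_type :: "(nat \<Rightarrow> nat) \<Rightarrow> (nat \<Rightarrow> nat) \<Rightarrow> (nat \<Rightarrow> nat) \<Rightarrow> bool" where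
  "is_type m n r \<longleftrightarrow> m 0 = 1 \<and>
     (\<forall>k. n (Suc k) \<ge> 2 \<and> m k > r (Suc k) \<and>
          m (Suc k) = r (Suc k) + (m k - r (Suc k)) * n (Suc k))"

definition good_type :: "(nat \<Rightarrow> nat) \<Rightarrow> (nat \<Rightarrow> nat) \<Rightarrow> (nat \<Rightarrow> nat) \<Rightarrow> bool" where
  "good_type m n r \<longleftrightarrow> is_type m n r \<and> (\<forall>j. infinite {k. k \<ge> 1 \<and> r k = j})"

definition set_less :: "'b::order set \<Rightarrow> 'b set \<Rightarrow> bool" where
  "set_less A B \<longleftrightarrow> (\<forall>a\<in>A. \<forall>b\<in>B. a < b)"

definition initial_segment :: "'b::order set \<Rightarrow> 'b set \<Rightarrow> bool" where
  "initial_segment S A \<longleftrightarrow> S \<subseteq> A \<and> (\<forall>a\<in>S. \<forall>b\<in>A. b < a \<longrightarrow> b \<in> S)"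

definition level :: "'b set set \<Rightarrow> (nat \<Rightarrow> nat) \<Rightarrow> nat \<Rightarrow> 'b set set" where
  "level \<F> m k = {F \<in> \<F>. card F = m k}"

definition construction_scheme ::
  "(nat \<Rightarrow> nat) \<Rightarrow> (nat \<Rightarrow> nat) \<Rightarrow> (nat \<Rightarrow> nat) \<Rightarrow> 'b::order set set \<Rightarrow> bool" where
  "construction_scheme m n r \<F> \<longleftrightarrow>
     is_type m n r \<and>
     (\<forall>F\<in>\<F>. finite F \<and> F \<noteq> {} \<and> (\<exists>k. card F = m k)) \<and>
     (\<forall>A. finite A \<longrightarrow> (\<exists>F\<in>\<F>. A \<subseteq> F)) \<and>
     (\<forall>k. \<forall>E\<in>level \<F> m k. \<forall>F\<in>level \<F> m k.
          initial_segment (E \<inter> F) E \<and> initial_segment (E \<inter> F) F) \<and>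
     (\<forall>k. \<forall>F\<in>level \<F> m (Suc k). \<exists>(Fs :: nat \<Rightarrow> 'b set) R.
          (\<forall>i<n (Suc k). Fs i \<in> level \<F> m k) \<and>
          F = (\<Union>i<n (Suc k). Fs i) \<and>
          (\<forall>i<n (Suc k). \<forall>j<n (Suc k). i \<noteq> j \<longrightarrow> Fs i \<inter> Fs j = R) \<and>
          card R = r (Suc k) \<and>
          set_less R (Fs 0 - R) \<and>
          (\<forall>i. Suc i < n (Suc k) \<longrightarrow> set_less (Fs i - R) (Fs (Suc i) - R)))"

definition rho :: "'b set set \<Rightarrow> (nat \<Rightarrow> nat) \<Rightarrow> 'b \<Rightarrow> 'b \<Rightarrow> nat" where
  "rho \<F> m \<alpha> \<beta> = (LEAST k. \<exists>F\<in>level \<F> m k. {\<alpha>, \<beta>} \<subseteq> F)"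

definition rho_set :: "'b set set \<Rightarrow> (nat \<Rightarrow> nat) \<Rightarrow> 'b set \<Rightarrow> nat" where
  "rho_set \<F> m A = Max {rho \<F> m \<alpha> \<beta> | \<alpha> \<beta>. \<alpha> \<in> A \<and> \<beta> \<in> A}"

definition closure_k :: "'b set set \<Rightarrow> (nat \<Rightarrow> nat) \<Rightarrow> 'b::order \<Rightarrow> nat \<Rightarrow> 'b set" where
  "closure_k \<F> m \<alpha> k = {\<xi>. \<xi> \<le> \<alpha> \<and> rho \<F> m \<xi> \<alpha> \<le> k}"

definition omega1_like :: "'b::wellorder itself \<Rightarrow> 'a::order itself \<Rightarrow> bool" where
  "omega1_like _ _ \<longleftrightarrow> wf {(x::'a, y). x < y} \<and> (\<exists>f :: 'a \<Rightarrow> 'b. bij f) \<and>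
     (\<forall>x::'a. countable {y. y < x})"

definition is_inf :: "'a::order \<Rightarrow> 'a \<Rightarrow> 'a \<Rightarrow> bool" where
  "is_inf x y z \<longleftrightarrow> z \<le> x \<and> z \<le> y \<and> (\<forall>w. w \<le> x \<and> w \<le> y \<longrightarrow> w \<le> z)"

definition incompatible :: "'a::order \<Rightarrow> 'a \<Rightarrow> bool" where
  "incompatible x y \<longleftrightarrow> \<not> (\<exists>z. z \<le> x \<and> z \<le> y)"

definition pred_set :: "'a::order \<Rightarrow> 'a set" where
  "pred_set x = {y. y < x \<and> \<not> (\<exists>w. y < w \<and> w < x)}"

definition successor_like :: "'a::order \<Rightarrow> bool" where
  "successor_like x \<longleftrightarrow> finite (pred_set x) \<and> (\<forall>y. y < x \<longrightarrow> (\<exists>z\<in>pred_set x. y \<le> z))"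

definition Mset :: "'b set set \<Rightarrow> (nat \<Rightarrow> nat) \<Rightarrow> ('a::order \<Rightarrow> 'b::order) \<Rightarrow> nat \<Rightarrow> 'a \<Rightarrow> 'a set" where
  "Mset \<F> m \<phi> k x = {z. z \<le> x \<and> \<phi> z \<in> closure_k \<F> m (\<phi> x) k}"

end

theory Submission
  imports Defs
begin

lemma cs_fin: "construction_scheme m n r F \<Longrightarrow> G \<in> F \<Longrightarrow> finite G \<and> G \<noteq> {} \<and> (\<exists>k. card G = m k)"
  unfolding construction_scheme_def by (elim conjE) (drule bspec, assumption)

lemma cs_cof: "construction_scheme m n r F \<Longrightarrow> finite A \<Longrightarrow> \<exists>G\<in>F. A \<subseteq> G"
  unfolding construction_scheme_def by (elim conjE) (erule allE, erule mp)

lemma cs_init: "construction_scheme m n r F \<Longrightarrow> E \<in> level F m k \<Longrightarrow> G \<in> level F m k \<Longrightarrow> initial_segment (E \<inter> G) E"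
  unfolding construction_scheme_def by (elim conjE) (drule spec[of _ k], drule bspec, assumption, drule bspec, assumption, erule conjunct1)

lemma cs_dec: "construction_scheme m n r F \<Longrightarrow> G \<in> level F m (Suc k) \<Longrightarrow>
   \<exists>Fs :: nat \<Rightarrow> 'a::order set. (\<forall>i<n (Suc k). Fs i \<in> level F m k) \<and> G = (\<Union>i<n (Suc k). Fs i)"
proof -
  assume cs: "construction_scheme m n r F" and G: "G \<in> level F m (Suc k)"
  have "\<forall>k. \<forall>H\<in>level F m (Suc k). \<exists>(Fs :: nat \<Rightarrow> 'a set) R.
          (\<forall>i<n (Suc k). Fs i \<in> level F m k) \<and>
          H = (\<Union>i<n (Suc k). Fs i) \<and>
          (\<forall>i<n (Suc k). \<forall>j<n (Suc k). i \<noteq> j \<longrightarrow> Fs i \<inter> Fs j = R) \<and>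
          card R = r (Suc k) \<and>
          set_less R (Fs 0 - R) \<and>
          (\<forall>i. Suc i < n (Suc k) \<longrightarrow> set_less (Fs i - R) (Fs (Suc i) - R))"
    using cs unfolding construction_scheme_def by (elim conjE) assumption
  then obtain Fs :: "nat \<Rightarrow> 'a set" and R where "(\<forall>i<n (Suc k). Fs i \<in> level F m k)" "G = (\<Union>i<n (Suc k). Fs i)"
    using G by meson
  then show ?thesis by blast
qed

lemma cs_type: "construction_scheme m n r F \<Longrightarrow> is_type m n r"
  by (simp add: construction_scheme_def)

lemma m_smono:
  assumes "construction_scheme m n r F" shows "strict_mono m"
unfolding strict_mono_Suc_iff
proof (rule allI)
  fix k
  have t: "n (Suc k) \<ge> 2" "m k > r (Suc k)" "m (Suc k) = r (Suc k) + (m k - r (Suc k)) * n (Suc k)"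
    using cs_type[OF assms] by (auto simp: is_type_def)
  have "(m k - r (Suc k)) * n (Suc k) \<ge> (m k - r (Suc k)) * 2" using t(1) by simp
  then show "m k < m (Suc k)" using t by linarith
qed

lemma descend:
  fixes F :: "'a::order set set"
  assumes cs: "construction_scheme m n r F"
  shows "G \<in> level F m l \<Longrightarrow> \<alpha> \<in> G \<Longrightarrow> k \<le> l \<Longrightarrow> \<exists>G'\<in>level F m k. \<alpha> \<in> G'"
proof (induction l arbitrary: G)
  case 0 then show ?case by auto
next
  case (Suc l)
  show ?case
  proof (cases "k = Suc l")
    case True then show ?thesis using Suc by auto
  next
    case False
    then have kl: "k \<le> l" using Suc by auto
    from cs_dec[OF cs Suc.prems(1)] obtain Fs :: "nat \<Rightarrow> 'a set" where
      "\<forall>i<n (Suc l). Fs i \<in> level F m l" "G = (\<Union>i<n (Suc l). Fs i)"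
      by blast
    then obtain i where "Fs i \<in> level F m l" "\<alpha> \<in> Fs i" using Suc.prems(2) by auto
    then show ?thesis using Suc.IH kl by blast
  qed
qed

lemma every_level:
  assumes cs: "construction_scheme m n r F" and inf: "infinite (UNIV :: 'a::order set)"
  shows "\<exists>G\<in>level F m k. (\<alpha>::'a) \<in> G"
proof -
  obtain B :: "'a set" where B: "finite B" "card B = Suc (m k)"
    using infinite_arbitrarily_large[OF inf] by blast
  let ?A = "insert \<alpha> B"
  have "finite ?A" using B by simp
  then obtain G where G: "G \<in> F" "?A \<subseteq> G" using cs_cof[OF cs] by blast
  then obtain l where l: "card G = m l" and fG: "finite G" using cs_fin[OF cs] by blast
  have "card B \<le> card G" using G fG by (meson card_mono subset_insertI2 subset_refl subset_trans)
  then have "m k < m l" using B l by simp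
  then have "k < l" using m_smono[OF cs] by (simp add: strict_mono_less)
  moreover have "G \<in> level F m l" using G l by (simp add: level_def)
  ultimately show ?thesis using descend[OF cs, of G l \<alpha> k] G by auto
qed

lemma init_across:
  fixes F :: "'a::order set set"
  assumes cs: "construction_scheme m n r F" and E: "E \<in> level F m j"
  shows "G \<in> level F m l \<Longrightarrow> j \<le> l \<Longrightarrow> initial_segment (E \<inter> G) E"
proof (induction l arbitrary: G)
  case 0 then show ?case using cs_init[OF cs] E by auto
next
  case (Suc l)
  show ?case
  proof (cases "j = Suc l")
    case True then show ?thesis using Suc.prems cs_init[OF cs] E by auto
  next
    case False
    then have kl: "j \<le> l" using Suc by auto
    from cs_dec[OF cs Suc.prems(1)] obtain Fs :: "nat \<Rightarrow> 'a set" where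
      Fs: "\<forall>i<n (Suc l). Fs i \<in> level F m l" "G = (\<Union>i<n (Suc l). Fs i)"
      by blast
    have "\<forall>i<n (Suc l). initial_segment (E \<inter> Fs i) E" using Suc.IH Fs kl by blast
    then show ?thesis using Fs(2) unfolding initial_segment_def by blast
  qed
qed

lemma lift:
  fixes F :: "'a::linorder set set"
  assumes cs: "construction_scheme m n r F" and inf: "infinite (UNIV :: 'a::linorder set)"
    and E: "E \<in> level F m j" and jk: "j \<le> k"
  shows "\<exists>G\<in>level F m k. E \<subseteq> G"
proof -
  have fE: "finite E" "E \<noteq> {}" using cs_fin[OF cs] E unfolding level_def by auto
  define e where "e = Max E"
  have eE: "e \<in> E" using fE e_def by simp
  obtain G where G: "G \<in> level F m k" "e \<in> G" using every_level[OF cs inf] by blast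
  have iseg: "initial_segment (E \<inter> G) E" using init_across[OF cs E G(1) jk] .
  have "E \<subseteq> G"
  proof
    fix b assume b: "b \<in> E"
    have "b \<le> e" using fE b e_def by simp
    then show "b \<in> G" using iseg eE G(2) b unfolding initial_segment_def
      by (metis IntD2 IntI order_le_less)
  qed
  then show ?thesis using G by blast
qed

lemma rho_le:
  fixes F :: "'a::linorder set set"
  assumes cs: "construction_scheme m n r F" and inf: "infinite (UNIV :: 'a::linorder set)"
  shows "rho F m (a::'a) b \<le> k \<longleftrightarrow> (\<exists>G\<in>level F m k. {a,b} \<subseteq> G)"
proof
  assume h: "rho F m a b \<le> k"
  have "finite {a,b}" by simp
  then obtain G where G: "G \<in> F" "{a,b} \<subseteq> G" using cs_cof[OF cs] by blast
  then obtain l where "card G = m l" using cs_fin[OF cs] by blast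
  then have ex: "\<exists>G\<in>level F m l. {a,b} \<subseteq> G" using G by (auto simp: level_def)
  have "\<exists>G\<in>level F m (rho F m a b). {a,b} \<subseteq> G"
    unfolding rho_def by (rule LeastI_ex) (use ex in blast)
  then obtain E where E: "E \<in> level F m (rho F m a b)" "{a,b} \<subseteq> E" by blast
  obtain G' where "G' \<in> level F m k" "E \<subseteq> G'" using lift[OF cs inf E(1) h] by blast
  then show "\<exists>G\<in>level F m k. {a,b} \<subseteq> G" using E(2) by blast
next
  assume "\<exists>G\<in>level F m k. {a,b} \<subseteq> G"
  then show "rho F m a b \<le> k" unfolding rho_def
    by (rule Least_le[where P="\<lambda>k. \<exists>G\<in>level F m k. {a,b} \<subseteq> G"])
qed

lemma rho_sym: "rho F m a b = rho F m b a"
  by (simp add: rho_def insert_commute)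

lemma rho_refl:
  fixes F :: "'a::linorder set set"
  assumes cs: "construction_scheme m n r F" and inf: "infinite (UNIV :: 'a::linorder set)"
  shows "rho F m (a::'a) a \<le> k"
  using every_level[OF cs inf, of k a] rho_le[OF cs inf] by auto

lemma shared:
  fixes F :: "'a::linorder set set"
  assumes cs: "construction_scheme m n r F"
    and "E \<in> level F m k" "G \<in> level F m k" "p \<in> E" "p \<in> G" "q \<in> E" "(q::'a::linorder) \<le> p"
  shows "q \<in> G"
proof -
  have "initial_segment (E \<inter> G) E" using cs_init[OF cs assms(2,3)] .
  then show ?thesis using assms(4-7) unfolding initial_segment_def by (metis IntD2 IntI order_le_less)
qed

lemma rho_trans:
  fixes F :: "'a::linorder set set"
  assumes cs: "construction_scheme m n r F" and inf: "infinite (UNIV :: 'a::linorder set)"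
    and "rho F m a b \<le> k" "rho F m b c \<le> k" "(a::'a) \<le> b"
  shows "rho F m a c \<le> k"
proof -
  obtain E where E: "E \<in> level F m k" "{a,b} \<subseteq> E" using assms(3) rho_le[OF cs inf] by blast
  obtain G where G: "G \<in> level F m k" "{b,c} \<subseteq> G" using assms(4) rho_le[OF cs inf] by blast
  have "a \<in> G" using shared[OF cs E(1) G(1), of b a] E G assms(5) by auto
  then show ?thesis using G rho_le[OF cs inf] by blast
qed

lemma rho_rtrans:
  fixes F :: "'a::linorder set set"
  assumes cs: "construction_scheme m n r F" and inf: "infinite (UNIV :: 'a::linorder set)"
    and "rho F m a c \<le> k" "rho F m b c \<le> k" "(a::'a) \<le> c"
  shows "rho F m a b \<le> k"
proof -
  obtain E where E: "E \<in> level F m k" "{a,c} \<subseteq> E" using assms(3) rho_le[OF cs inf] by blast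
  obtain G where G: "G \<in> level F m k" "{b,c} \<subseteq> G" using assms(4) rho_le[OF cs inf] by blast
  have "a \<in> G" using shared[OF cs E(1) G(1), of c a] E G assms(5) by auto
  then show ?thesis using G rho_le[OF cs inf] by blast
qed

lemma Mset_iff: "z \<in> Mset F m \<phi> k x \<longleftrightarrow> z \<le> x \<and> \<phi> z \<le> \<phi> x \<and> rho F m (\<phi> z) (\<phi> x) \<le> k"
  by (simp add: Mset_def closure_k_def)

lemma rho_set_ge:
  assumes "finite A" "a \<in> A" "b \<in> A"
  shows "rho F m a b \<le> rho_set F m A"
proof -
  have "finite {rho F m \<alpha> \<beta> | \<alpha> \<beta>. \<alpha> \<in> A \<and> \<beta> \<in> A}"
  proof -
    have "{rho F m \<alpha> \<beta> | \<alpha> \<beta>. \<alpha> \<in> A \<and> \<beta> \<in> A} = (\<lambda>(\<alpha>,\<beta>). rho F m \<alpha> \<beta>) ` (A \<times> A)" by auto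
    then show ?thesis using assms(1) by simp
  qed
  then show ?thesis unfolding rho_set_def using assms by (intro Max_ge) auto
qed

theorem mainTheorem11:
  fixes \<F> :: "'b::wellorder set set" and m n r :: "nat \<Rightarrow> nat"
    and \<phi> :: "'a::order \<Rightarrow> 'b"
  assumes omega1: "is_omega1 TYPE('b)"
    and scheme: "construction_scheme m n r \<F>"
    and good: "good_type m n r"
    and olike: "omega1_like TYPE('b) TYPE('a)"
    and bij: "bij \<phi>"
    and mono: "\<And>x y. x < y \<Longrightarrow> \<phi> x < \<phi> y"
  shows
    "(\<forall>x y z k. is_inf x y z \<and> k > rho_set \<F> m (\<phi> ` {x, y, z}) \<longrightarrow>
        Mset \<F> m \<phi> k x \<inter> Mset \<F> m \<phi> k y = Mset \<F> m \<phi> k z) \<and>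
     (\<forall>x y k. y \<le> x \<and> k > rho \<F> m (\<phi> x) (\<phi> y) \<longrightarrow> Mset \<F> m \<phi> k y \<subseteq> Mset \<F> m \<phi> k x) \<and>
     (\<forall>x y k. \<not> y \<le> x \<longrightarrow> y \<in> Mset \<F> m \<phi> k y - Mset \<F> m \<phi> k x) \<and>
     (\<forall>x k. successor_like x \<and> k > rho_set \<F> m (\<phi> ` (pred_set x \<union> {x})) \<longrightarrow>
        Mset \<F> m \<phi> k x - (\<Union>z\<in>pred_set x. Mset \<F> m \<phi> k z) = {x}) \<and>
     (\<forall>x y k. incompatible x y \<longrightarrow> Mset \<F> m \<phi> k x \<inter> Mset \<F> m \<phi> k y = {})"
proof -
  have inf: "infinite (UNIV :: 'b set)" using omega1 unfolding is_omega1_def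
    using countable_finite by blast
  note cs = scheme
  have pm: "\<And>x y. x \<le> y \<Longrightarrow> \<phi> x \<le> \<phi> y" using mono by (metis order.order_iff_strict)
  have selfM: "\<And>x k. x \<in> Mset \<F> m \<phi> k x" using rho_refl[OF cs inf] by (simp add: Mset_iff)
  have P2: "\<forall>x y k. y \<le> x \<and> k > rho \<F> m (\<phi> x) (\<phi> y) \<longrightarrow> Mset \<F> m \<phi> k y \<subseteq> Mset \<F> m \<phi> k x"
  proof (intro allI impI subsetI)
    fix x y k w assume h: "y \<le> x \<and> k > rho \<F> m (\<phi> x) (\<phi> y)" and w: "w \<in> Mset \<F> m \<phi> k y"
    have w': "w \<le> y" "\<phi> w \<le> \<phi> y" "rho \<F> m (\<phi> w) (\<phi> y) \<le> k" using w by (auto simp: Mset_iff)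
    have "rho \<F> m (\<phi> y) (\<phi> x) \<le> k" using h rho_sym[of \<F> m "\<phi> x" "\<phi> y"] by simp
    then have "rho \<F> m (\<phi> w) (\<phi> x) \<le> k" using rho_trans[OF cs inf w'(3)] w'(2) by blast
    then show "w \<in> Mset \<F> m \<phi> k x" using w' h pm by (auto simp: Mset_iff intro: order_trans)
  qed
  have P1: "\<forall>x y z k. is_inf x y z \<and> k > rho_set \<F> m (\<phi> ` {x, y, z}) \<longrightarrow>
        Mset \<F> m \<phi> k x \<inter> Mset \<F> m \<phi> k y = Mset \<F> m \<phi> k z"
  proof (intro allI impI)
    fix x y z k assume h: "is_inf x y z \<and> k > rho_set \<F> m (\<phi> ` {x, y, z})"
    have zx: "z \<le> x" and zy: "z \<le> y" and gl: "\<And>w. w \<le> x \<Longrightarrow> w \<le> y \<Longrightarrow> w \<le> z"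
      using h by (auto simp: is_inf_def)
    have rx: "rho \<F> m (\<phi> x) (\<phi> z) < k" using h rho_set_ge[of "\<phi> ` {x,y,z}" "\<phi> x" "\<phi> z" \<F> m] by simp
    have ry: "rho \<F> m (\<phi> y) (\<phi> z) < k" using h rho_set_ge[of "\<phi> ` {x,y,z}" "\<phi> y" "\<phi> z" \<F> m] by simp
    show "Mset \<F> m \<phi> k x \<inter> Mset \<F> m \<phi> k y = Mset \<F> m \<phi> k z"
    proof
      show "Mset \<F> m \<phi> k z \<subseteq> Mset \<F> m \<phi> k x \<inter> Mset \<F> m \<phi> k y"
        using P2 zx zy rx ry by blast
    next
      show "Mset \<F> m \<phi> k x \<inter> Mset \<F> m \<phi> k y \<subseteq> Mset \<F> m \<phi> k z"
      proof
        fix w assume w: "w \<in> Mset \<F> m \<phi> k x \<inter> Mset \<F> m \<phi> k y"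
        have wz: "w \<le> z" using w gl by (auto simp: Mset_iff)
        have r1: "rho \<F> m (\<phi> w) (\<phi> x) \<le> k" "\<phi> w \<le> \<phi> x" using w by (auto simp: Mset_iff)
        have "rho \<F> m (\<phi> z) (\<phi> x) \<le> k" using rx rho_sym[of \<F> m "\<phi> x" "\<phi> z"] by simp
        then have "rho \<F> m (\<phi> w) (\<phi> z) \<le> k" using rho_rtrans[OF cs inf r1(1) _ r1(2)] by blast
        then show "w \<in> Mset \<F> m \<phi> k z" using wz pm by (simp add: Mset_iff)
      qed
    qed
  qed
  have P3: "\<forall>x y k. \<not> y \<le> x \<longrightarrow> y \<in> Mset \<F> m \<phi> k y - Mset \<F> m \<phi> k x"
    using selfM by (auto simp: Mset_iff)
  have P4: "\<forall>x k. successor_like x \<and> k > rho_set \<F> m (\<phi> ` (pred_set x \<union> {x})) \<longrightarrow>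
        Mset \<F> m \<phi> k x - (\<Union>z\<in>pred_set x. Mset \<F> m \<phi> k z) = {x}"
  proof (intro allI impI)
    fix x k assume h: "successor_like x \<and> k > rho_set \<F> m (\<phi> ` (pred_set x \<union> {x}))"
    have fin: "finite (\<phi> ` (pred_set x \<union> {x}))" using h by (simp add: successor_like_def)
    have cov: "\<And>w. w < x \<Longrightarrow> \<exists>z\<in>pred_set x. w \<le> z" using h by (simp add: successor_like_def)
    have predlt: "\<And>z. z \<in> pred_set x \<Longrightarrow> z < x" by (simp add: pred_set_def)
    show "Mset \<F> m \<phi> k x - (\<Union>z\<in>pred_set x. Mset \<F> m \<phi> k z) = {x}"
    proof
      show "{x} \<subseteq> Mset \<F> m \<phi> k x - (\<Union>z\<in>pred_set x. Mset \<F> m \<phi> k z)"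
        using selfM predlt by (auto simp: Mset_iff dest: leD)
    next
      show "Mset \<F> m \<phi> k x - (\<Union>z\<in>pred_set x. Mset \<F> m \<phi> k z) \<subseteq> {x}"
      proof
        fix w assume w: "w \<in> Mset \<F> m \<phi> k x - (\<Union>z\<in>pred_set x. Mset \<F> m \<phi> k z)"
        show "w \<in> {x}"
        proof (rule ccontr)
          assume "w \<notin> {x}"
          then have "w < x" using w by (auto simp: Mset_iff)
          then obtain z where z: "z \<in> pred_set x" "w \<le> z" using cov by blast
          have r1: "rho \<F> m (\<phi> w) (\<phi> x) \<le> k" "\<phi> w \<le> \<phi> x" using w by (auto simp: Mset_iff)
          have "rho \<F> m (\<phi> z) (\<phi> x) \<le> rho_set \<F> m (\<phi> ` (pred_set x \<union> {x}))"
            using rho_set_ge[OF fin] z by auto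
          then have "rho \<F> m (\<phi> z) (\<phi> x) \<le> k" using h by simp
          then have "rho \<F> m (\<phi> w) (\<phi> z) \<le> k" using rho_rtrans[OF cs inf r1(1) _ r1(2)] by blast
          then have "w \<in> Mset \<F> m \<phi> k z" using z pm by (simp add: Mset_iff)
          then show False using w z by blast
        qed
      qed
    qed
  qed
  have P5: "\<forall>x y k. incompatible x y \<longrightarrow> Mset \<F> m \<phi> k x \<inter> Mset \<F> m \<phi> k y = {}"
    by (auto simp: incompatible_def Mset_iff)
  show ?thesis using P1 P2 P3 P4 P5 by blast
qed

end
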